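(* Let $a\in \mathcal{A}$. Then $a\in \mathcal{A}^{\mathrm{gcEP}}$ if and only if (1) $a\in \mathcal{A}^d$; and (2) there exists a unique projection $q\in \mathcal{A}$ such that $\ell(a^d)=\ell(q)$.
   Context: $\mathcal{A}$ is a complex Banach *-algebra with identity; a projection is $q$ with $q=q^2=q^*$. $\mathcal{A}^d$ is the set of generalized Drazin invertible elements, with $a^d$ the generalized Drazin inverse ($a(a^d)^2=a^d$, $aa^d=a^da$, $a-a^2a^d$ quasinilpotent). $\mathcal{A}^{\mathrm{gcEP}}$ is the set of $a$ for which there is $x\in\mathcal{A}$ with $x=ax^2$, $(ax)^*=ax$, $\lim_{n\to\infty}\|a^n-xa^{n+1}\|^{1/n}=0$ (generalized core-EP invertible elements). $\ell(\cdot)$ denotes the left annihilator. *)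

theory Defs
  imports "HOL-Analysis.Analysis"
begin

text \<open>A complex Banach *-algebra with identity: the carrier is a type of class
  real_normed_algebra_1 and banach (complete normed real algebra with unit, norm 1 = 1),
  equipped with a complex scalar multiplication cs extending the real one, and an
  involution st.\<close>

definition complex_banach_star_algebra ::
  "(complex \<Rightarrow> 'a::{real_normed_algebra_1,banach} \<Rightarrow> 'a) \<Rightarrow> ('a \<Rightarrow> 'a) \<Rightarrow> bool" where
  "complex_banach_star_algebra cs st \<longleftrightarrow>
     (\<forall>r x. cs (complex_of_real r) x = r *\<^sub>R x) \<and>
     (\<forall>c d x. cs (c * d) x = cs c (cs d x)) \<and>
     (\<forall>c d x. cs (c + d) x = cs c x + cs d x) \<and>
     (\<forall>c x y. cs c (x + y) = cs c x + cs c y) \<and>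
     (\<forall>c x. norm (cs c x) = cmod c * norm x) \<and>
     (\<forall>c x y. cs c (x * y) = cs c x * y) \<and>
     (\<forall>c x y. cs c (x * y) = x * cs c y) \<and>
     (\<forall>x. st (st x) = x) \<and>
     (\<forall>x y. st (x + y) = st x + st y) \<and>
     (\<forall>x y. st (x * y) = st y * st x) \<and>
     (\<forall>c x. st (cs c x) = cs (cnj c) (st x))"

definition quasinilpotent :: "'a::real_normed_algebra_1 \<Rightarrow> bool" where
  "quasinilpotent x \<longleftrightarrow> (\<lambda>n. norm (x ^ n) powr (1 / real n)) \<longlonglongrightarrow> 0"

definition is_gdrazin_inv :: "'a::real_normed_algebra_1 \<Rightarrow> 'a \<Rightarrow> bool" where
  "is_gdrazin_inv a x \<longleftrightarrow> a * x ^ 2 = x \<and> a * x = x * a \<and> quasinilpotent (a - a ^ 2 * x)"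

definition gdrazin_invertible :: "'a::real_normed_algebra_1 set" where
  "gdrazin_invertible = {a. \<exists>x. is_gdrazin_inv a x}"

definition gdrazin :: "'a::real_normed_algebra_1 \<Rightarrow> 'a" where
  "gdrazin a = (THE x. is_gdrazin_inv a x)"

definition is_projection :: "('a::real_normed_algebra_1 \<Rightarrow> 'a) \<Rightarrow> 'a \<Rightarrow> bool" where
  "is_projection st q \<longleftrightarrow> q = q ^ 2 \<and> q = st q"

definition left_ann :: "'a::real_normed_algebra_1 \<Rightarrow> 'a set" where
  "left_ann x = {y. y * x = 0}"

definition gcEP_invertible :: "('a::real_normed_algebra_1 \<Rightarrow> 'a) \<Rightarrow> 'a set" where
  "gcEP_invertible st = {a. \<exists>x. x = a * x ^ 2 \<and> st (a * x) = a * x \<and>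
      (\<lambda>n. norm (a ^ n - x * a ^ (n + 1)) powr (1 / real n)) \<longlonglongrightarrow> 0}"

end

theory Submission
  imports Defs
begin



lemma root_bound:
  fixes w :: "nat \<Rightarrow> 'a::real_normed_vector" and v :: "nat \<Rightarrow> 'b::real_normed_vector"
  assumes w: "(\<lambda>n. norm (w n) powr (1 / real n)) \<longlonglongrightarrow> 0"
    and ev: "eventually (\<lambda>n. norm (v n) \<le> K * C ^ n * norm (w n)) sequentially"
    and K: "K \<ge> 0" and C: "C \<ge> 0"
  shows "(\<lambda>n. norm (v n) powr (1 / real n)) \<longlonglongrightarrow> 0"
proof (rule Lim_null_comparison)
  define K' where "K' = K + 1"
  define C' where "C' = C + 1"
  have K'p: "K' > 0" and C'p: "C' > 0" using K C by (auto simp: K'_def C'_def)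
  have lim1: "(\<lambda>n. K' powr (1 / real n)) \<longlonglongrightarrow> K' powr 0"
    by (rule tendsto_powr) (use K'p lim_1_over_n in auto)
  show "(\<lambda>n. K' powr (1 / real n) * C' * norm (w n) powr (1 / real n)) \<longlonglongrightarrow> 0"
    using tendsto_mult[OF tendsto_mult[OF lim1 tendsto_const[of C']] w] K'p by simp
  show "\<forall>\<^sub>F n in sequentially. norm (norm (v n) powr (1 / real n)) \<le> K' powr (1 / real n) * C' * norm (w n) powr (1 / real n)"
    using ev eventually_gt_at_top[of 0]
  proof eventually_elim
    case (elim n)
    have "norm (v n) \<le> K' * C' ^ n * norm (w n)"
    proof -
      have "K * C ^ n \<le> K' * C' ^ n"
        using K C by (auto simp: K'_def C'_def intro!: mult_mono power_mono)
      then have "K * C ^ n * norm (w n) \<le> K' * C' ^ n * norm (w n)"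
        by (simp add: mult_right_mono)
      then show ?thesis using elim by linarith
    qed
    then have "norm (v n) powr (1 / real n) \<le> (K' * C' ^ n * norm (w n)) powr (1 / real n)"
      by (intro powr_mono2) auto
    also have "\<dots> = K' powr (1 / real n) * (C' ^ n) powr (1 / real n) * norm (w n) powr (1 / real n)"
      using K'p C'p by (simp add: powr_mult)
    also have "(C' ^ n) powr (1 / real n) = C'"
    proof -
      have "(C' ^ n) powr (1 / real n) = (C' powr real n) powr (1 / real n)"
        using C'p by (simp add: powr_realpow)
      also have "\<dots> = C'" using elim C'p by (simp add: powr_powr)
      finally show ?thesis .
    qed
    finally show ?case by simp
  qed
qed

lemma zero_by_root:
  fixes w :: "nat \<Rightarrow> 'a::real_normed_vector" and y :: "'b::real_normed_vector"
  assumes w: "(\<lambda>n. norm (w n) powr (1 / real n)) \<longlonglongrightarrow> 0"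
    and b: "\<And>n. n \<ge> 1 \<Longrightarrow> norm y \<le> K * C ^ n * norm (w n)"
    and K: "K \<ge> 0" and C: "C \<ge> 0"
  shows "y = 0"
proof (rule ccontr)
  assume y: "y \<noteq> 0"
  have "eventually (\<lambda>n. norm ((\<lambda>_. y) n) \<le> K * C ^ n * norm (w n)) sequentially"
    using b by (auto simp: eventually_at_top_linorder)
  from root_bound[OF w this K C] have 0: "(\<lambda>n. norm y powr (1 / real n)) \<longlonglongrightarrow> 0" .
  have 1: "(\<lambda>n. norm y powr (1 / real n)) \<longlonglongrightarrow> norm y powr 0"
    by (rule tendsto_powr) (use y lim_1_over_n in auto)
  from LIMSEQ_unique[OF 0 1] y show False by simp
qed

lemma root_summable:
  fixes v :: "nat \<Rightarrow> 'a::banach"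
  assumes "(\<lambda>n. norm (v n) powr (1 / real n)) \<longlonglongrightarrow> 0"
  shows "summable v"
proof (rule root_test_convergence)
  show "(\<lambda>n. root n (norm (v n))) \<longlonglongrightarrow> 0"
  proof (rule LIMSEQ_offset[where k=1])
    show "(\<lambda>n. root (n + 1) (norm (v (n + 1)))) \<longlonglongrightarrow> 0"
    proof -
      have "(\<lambda>n. norm (v (n+1)) powr (1 / real (n+1))) \<longlonglongrightarrow> 0"
        using LIMSEQ_ignore_initial_segment[OF assms, of 1] by simp
      moreover have "root (n + 1) (norm (v (n + 1))) = norm (v (n+1)) powr (1 / real (n+1))" for n
        by (cases "v (n+1) = 0") (auto simp: root_powr_inverse)
      ultimately show ?thesis by simp
    qed
  qed
qed simp



lemma pow_comm: fixes a b :: "'a::ring_1" assumes "a*b = b*a" shows "a^n*b = b*a^n"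
proof (induction n)
  case (Suc n)
  have "a^Suc n * b = a * (a^n*b)" by (simp add: mult.assoc)
  also have "\<dots> = a*b*a^n" using Suc by (simp add: mult.assoc)
  also have "\<dots> = b * a^Suc n" using assms by (simp add: mult.assoc)
  finally show ?case .
qed simp

lemma pow_mult_comm: fixes a b :: "'a::ring_1" assumes "a*b = b*a" shows "(a*b)^n = a^n*b^n"
proof (induction n)
  case (Suc n)
  have "(a*b)^Suc n = a*b*(a^n*b^n)" using Suc by simp
  also have "\<dots> = a*(b*a^n)*b^n" by (simp add: mult.assoc)
  also have "\<dots> = a*(a^n*b)*b^n" using pow_comm[OF assms, of n] by simp
  also have "\<dots> = a^Suc n * b^Suc n" by (simp add: mult.assoc power_Suc2)
  finally show ?case .
qed simp

lemma pow_idem: fixes p :: "'a::ring_1" assumes "p*p = p" "n \<ge> 1" shows "p^n = p"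
  using assms(2)
proof (induction n rule: dec_induct)
  case (step n) then show ?case using assms(1) by (simp add: power_Suc2)
qed simp

lemma pow_comm_idem: fixes a p :: "'a::ring_1" assumes "a*p = p*a" "p*p = p" "n \<ge> 1"
  shows "(a*p)^n = a^n*p"
  using pow_mult_comm[OF assms(1)] pow_idem[OF assms(2,3)] by simp

lemma gd_basic:
  fixes a b :: "'a::real_normed_algebra_1"
  assumes "is_gdrazin_inv a b"
  shows "a*b = b*a" "b*a*b = b" "a*b*(a*b) = a*b" "a - a^2*b = a*(1-a*b)"
    "quasinilpotent (a*(1-a*b))"
proof -
  have 1: "a*(b*b) = b" "a*b = b*a" "quasinilpotent (a - a^2*b)"
    using assms by (auto simp: is_gdrazin_inv_def power2_eq_square)
  show "a*b = b*a" by (fact 1)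
  show bab: "b*a*b = b" using 1 by (metis mult.assoc)
  show "a*b*(a*b) = a*b" using bab by (metis mult.assoc)
  show e: "a - a^2*b = a*(1-a*b)" by (simp add: power2_eq_square algebra_simps)
  show "quasinilpotent (a*(1-a*b))" using 1 e by simp
qed

lemma gd_unique_half:
  fixes a b c :: "'a::real_normed_algebra_1"
  assumes B: "is_gdrazin_inv a b" and C: "is_gdrazin_inv a c"
  shows "a*b*(1 - a*c) = 0" "(1 - a*c)*(a*b) = 0"
proof -
  note b = gd_basic[OF B] and c = gd_basic[OF C]
  define q where "q = 1 - a*c"
  have aq: "a*q = q*a"
  proof -
    have "a*q = a - a*(a*c)" by (simp add: q_def right_diff_distrib)
    moreover have "q*a = a - a*(c*a)" by (simp add: q_def left_diff_distrib mult.assoc)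
    ultimately show ?thesis using c(1) by simp
  qed
  have qq: "q*q = q" using c(3) by (simp add: q_def algebra_simps)
  have qn: "(\<lambda>n. norm ((a*q)^n) powr (1 / real n)) \<longlonglongrightarrow> 0"
    using c(5) by (simp add: quasinilpotent_def q_def)
  show "a*b*(1 - a*c) = 0" unfolding q_def[symmetric]
  proof (rule zero_by_root[OF qn, where K=1 and C="norm b"])
    fix n :: nat assume n: "n \<ge> 1"
    have "a*b*q = (a*b)^n * q" using pow_idem[OF b(3) n] by simp
    also have "\<dots> = b^n * (a^n*q)" using pow_mult_comm[OF b(1), of n] pow_comm[OF b(1), of n]
      by (metis mult.assoc pow_mult_comm b(1))
    also have "\<dots> = b^n * (a*q)^n" using pow_comm_idem[OF aq qq n] by simp
    finally have "norm (a*b*q) \<le> norm (b^n) * norm ((a*q)^n)" by (simp add: norm_mult_ineq)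
    also have "\<dots> \<le> norm b ^ n * norm ((a*q)^n)"
      by (intro mult_right_mono norm_power_ineq) auto
    finally show "norm (a*b*q) \<le> 1 * norm b ^ n * norm ((a*q)^n)" by simp
  qed auto
  show "(1 - a*c)*(a*b) = 0" unfolding q_def[symmetric]
  proof (rule zero_by_root[OF qn, where K=1 and C="norm b"])
    fix n :: nat assume n: "n \<ge> 1"
    have "q*(a*b) = q*(a^n*b^n)" using pow_idem[OF b(3) n] pow_mult_comm[OF b(1), of n] by simp
    also have "\<dots> = (q*a^n)*b^n" by (simp add: mult.assoc)
    also have "\<dots> = (a*q)^n * b^n" using pow_comm_idem[OF aq qq n] pow_comm[OF aq, of n]
      by (metis)
    finally have "norm (q*(a*b)) \<le> norm ((a*q)^n) * norm (b^n)" by (simp add: norm_mult_ineq)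
    also have "\<dots> \<le> norm ((a*q)^n) * norm b ^ n"
      by (intro mult_left_mono norm_power_ineq) auto
    finally show "norm (q*(a*b)) \<le> 1 * norm b ^ n * norm ((a*q)^n)" by (simp add: mult.commute)
  qed auto
qed

lemma gd_unique:
  fixes a b c :: "'a::real_normed_algebra_1"
  assumes B: "is_gdrazin_inv a b" and C: "is_gdrazin_inv a c"
  shows "b = c"
proof -
  note h1 = gd_unique_half[OF B C] and h2 = gd_unique_half[OF C B]
  note b = gd_basic[OF B] and c = gd_basic[OF C]
  have e1: "a*b = a*b*(a*c)" using h1(1) by (simp add: right_diff_distrib)
  have e4: "a*c = a*b*(a*c)" using h2(2) by (simp add: left_diff_distrib)
  have ab: "a*b = a*c" using e1 e4 by simp
  have "b = b*a*b" using b(2) by simp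
  also have "\<dots> = b*(a*c)" using ab by (simp add: mult.assoc)
  also have "\<dots> = (a*c)*c" using ab b(1) by (metis mult.assoc)
  also have "\<dots> = c" using c(1) c(2) by (metis mult.assoc)
  finally show ?thesis .
qed

lemma gdrazin_eq: "is_gdrazin_inv a d \<Longrightarrow> gdrazin a = d"
  unfolding gdrazin_def by (rule the_equality) (auto intro: gd_unique)



lemma gcep_core:
  fixes a x :: "'a::{real_normed_algebra_1,banach}"
  assumes x2: "x = a*x^2"
    and lim: "(\<lambda>n. norm (a^n - x*a^(n+1)) powr (1/real n)) \<longlonglongrightarrow> 0"
  shows "x*a*x = x" "\<exists>d. is_gdrazin_inv a d \<and> left_ann d = left_ann (a*x)"
proof -
  define w where "w n = a^n - x*a^(n+1)" for n
  have wl: "(\<lambda>n. norm (w n) powr (1/real n)) \<longlonglongrightarrow> 0" using lim by (simp add: w_def)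
  have ax2: "a*(x*x) = x" using x2 by (simp add: power2_eq_square)
  have A1: "a * x^(Suc (Suc n)) = x^(Suc n)" for n
  proof -
    have "a * x^(Suc (Suc n)) = (a*(x*x))*x^n" by (simp add: mult.assoc)
    then show ?thesis using ax2 by simp
  qed
  have A2: "a^n * x^(Suc n) = x" for n
  proof (induction n)
    case (Suc n)
    have "a^Suc n * x^(Suc (Suc n)) = a^n * (a * x^(Suc (Suc n)))" by (metis power_Suc2 mult.assoc)
    then show ?case using A1 Suc by simp
  qed simp
  have A3: "a^(Suc n) * x^(Suc n) = a*x" for n
    using A2[of n] by (metis mult.assoc power_Suc)
  show xax: "x*a*x = x"
  proof -
    have "x - x*a*x = 0"
    proof (rule zero_by_root[OF wl, where K="norm x" and C="norm x"])
      fix n :: nat assume "n \<ge> 1"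
      have "w n * x^(Suc n) = a^n*x^(Suc n) - x*(a^(Suc n)*x^(Suc n))"
        by (simp add: w_def left_diff_distrib mult.assoc)
      also have "\<dots> = x - x*a*x" using A2 A3 by (simp add: mult.assoc)
      finally have "norm (x - x*a*x) \<le> norm (w n) * norm (x^(Suc n))"
        by (metis norm_mult_ineq)
      also have "\<dots> \<le> norm (w n) * norm x ^ (Suc n)"
        by (intro mult_left_mono norm_power_ineq) auto
      finally show "norm (x - x*a*x) \<le> norm x * norm x ^ n * norm (w n)" by (simp add: ac_simps)
    qed auto
    then show ?thesis by simp
  qed
  have xae: "x*a*(a*x) = a*x"
  proof -
    have "a*x - x*a*(a*x) = 0"
    proof (rule zero_by_root[OF wl, where K="1" and C="norm x"])
      fix n :: nat assume n: "n \<ge> 1"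
      then obtain m where m: "n = Suc m" by (cases n) auto
      have "w n * x^n = a^n*x^n - x*a*(a^n*x^n)"
        by (simp add: w_def left_diff_distrib mult.assoc)
      also have "\<dots> = a*x - x*a*(a*x)" using A3[of m] m by simp
      finally have "norm (a*x - x*a*(a*x)) \<le> norm (w n) * norm (x^n)"
        by (metis norm_mult_ineq)
      also have "\<dots> \<le> norm (w n) * norm x ^ n"
        by (intro mult_left_mono norm_power_ineq) auto
      finally show "norm (a*x - x*a*(a*x)) \<le> 1 * norm x ^ n * norm (w n)" by (simp add: ac_simps)
    qed auto
    then show ?thesis by simp
  qed
  define e where "e = a*x"
  have ex: "e*x = x" using ax2 by (simp add: e_def mult.assoc)
  have xe: "x*e = x" using xax by (simp add: e_def mult.assoc)
  have xae': "x*a*e = e" using xae by (simp add: e_def)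
  have aee: "a*e = e*a*e"
  proof -
    have "e*a*e = a*(x*a*e)" by (simp add: e_def mult.assoc)
    then show ?thesis using xae' by simp
  qed
  have ake: "a^k*e = e*a^k*e" for k
  proof (induction k)
    case 0 show ?case using xe by (simp add: e_def mult.assoc)
  next
    case (Suc k)
    have "a^Suc k * e = a*(a^k*e)" by (simp add: mult.assoc)
    also have "\<dots> = (a*e)*a^k*e" using Suc by (simp add: mult.assoc)
    also have "\<dots> = e*a*(e*a^k*e)" using aee by (metis mult.assoc)
    also have "\<dots> = e*a*(a^k*e)" using Suc by simp
    also have "\<dots> = e*a^Suc k*e" by (simp add: mult.assoc)
    finally show ?case .
  qed
  have xakx: "x*a^(Suc k)*x = a^k*x" for k
  proof -
    have "x*a^(Suc k)*x = x*a*(a^k*e*x)" using ex by (simp add: mult.assoc)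
    also have "\<dots> = (x*a*e)*a^k*e*x" using ake by (simp add: mult.assoc)
    also have "\<dots> = e*a^k*e*x" using xae' by simp
    also have "\<dots> = a^k*e*x" using ake by simp
    also have "\<dots> = a^k*x" using ex by (simp add: mult.assoc)
    finally show ?thesis .
  qed
  have xkakx: "x^k*a^k*x = x" for k
  proof (induction k)
    case (Suc k)
    have "x^Suc k * a^Suc k * x = x^k*(x*a^(Suc k)*x)" by (metis power_Suc2 mult.assoc)
    also have "\<dots> = x^k*a^k*x" using xakx by (simp add: mult.assoc)
    finally show ?case using Suc by simp
  qed simp
  define S where "S n = x^(Suc n)*a^n" for n
  have S1: "a*S(Suc n)*S(Suc n) = S(Suc n)" for n
  proof -
    have "a*S(Suc n)*S(Suc n) = (a*x^(Suc (Suc n)))*(a^(Suc n)*x^(Suc (Suc n)))*a^(Suc n)"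
      by (simp only: S_def mult.assoc)
    also have "\<dots> = x^(Suc n)*x*a^(Suc n)" by (simp only: A1 A2)
    finally show ?thesis by (simp only: S_def power_Suc2)
  qed
  have S2: "S n * a = a * S (Suc n)" for n
  proof -
    have "a * S (Suc n) = (a*x^(Suc (Suc n)))*a^(Suc n)" by (simp only: S_def mult.assoc)
    also have "\<dots> = x^(Suc n)*(a^n*a)" by (subst A1) (simp only: power_Suc2)
    finally show ?thesis by (simp only: S_def mult.assoc)
  qed
  have S3: "a*S(Suc n)*x = x" for n
  proof -
    have "a*S(Suc n)*x = (a*x^(Suc (Suc n)))*a^(Suc n)*x" by (simp only: S_def mult.assoc)
    then show ?thesis by (simp only: A1 xkakx)
  qed
  have S4: "e*S n = S n" for n
    using ex by (simp add: S_def mult.assoc[symmetric] power_Suc)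
  define v where "v j = x^(Suc j)*w j" for j
  have S5: "S n = x - (\<Sum>j<n. v j)" for n
  proof (induction n)
    case 0 show ?case by (simp add: S_def)
  next
    case (Suc n)
    have xs: "x^(Suc (Suc n)) = x^(Suc n)*x" by (rule power_Suc2)
    have "S (Suc n) - S n = x^(Suc n)*(x*a^(Suc n) - a^n)"
      unfolding S_def xs by (simp add: right_diff_distrib mult.assoc del: power_Suc)
    also have "\<dots> = - v n" by (simp add: v_def w_def algebra_simps)
    finally show ?case using Suc by (simp add: algebra_simps)
  qed
  have vroot: "(\<lambda>n. norm (v n) powr (1/real n)) \<longlonglongrightarrow> 0"
  proof (rule root_bound[OF wl, where K="norm x" and C="norm x"])
    show "\<forall>\<^sub>F n in sequentially. norm (v n) \<le> norm x * norm x ^ n * norm (w n)"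
    proof (rule always_eventually, rule allI)
      fix n
      have "norm (v n) \<le> norm (x^(Suc n)) * norm (w n)" by (simp add: v_def norm_mult_ineq)
      also have "\<dots> \<le> norm x ^ (Suc n) * norm (w n)"
        by (intro mult_right_mono norm_power_ineq) auto
      finally show "norm (v n) \<le> norm x * norm x ^ n * norm (w n)" by simp
    qed
  qed auto
  have vs: "summable v" by (rule root_summable[OF vroot])
  define d where "d = x - suminf v"
  have Sl: "S \<longlonglongrightarrow> d"
    unfolding d_def S5 by (intro tendsto_diff tendsto_const summable_LIMSEQ[OF vs])
  have Sl1: "(\<lambda>n. S (Suc n)) \<longlonglongrightarrow> d" using Sl by (rule LIMSEQ_Suc)
  have d1: "a*d*d = d"
  proof -
    have "(\<lambda>n. a*S(Suc n)*S(Suc n)) \<longlonglongrightarrow> a*d*d"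
      by (intro tendsto_mult tendsto_const Sl1)
    then show ?thesis using S1 Sl1 LIMSEQ_unique by simp
  qed
  have d2: "d*a = a*d"
  proof -
    have "(\<lambda>n. S n * a) \<longlonglongrightarrow> d*a" by (intro tendsto_mult tendsto_const Sl)
    moreover have "(\<lambda>n. a * S (Suc n)) \<longlonglongrightarrow> a*d" by (intro tendsto_mult tendsto_const Sl1)
    ultimately show ?thesis using S2 LIMSEQ_unique by simp
  qed
  have d3: "a*d*x = x"
  proof -
    have "(\<lambda>n. a*S(Suc n)*x) \<longlonglongrightarrow> a*d*x" by (intro tendsto_mult tendsto_const Sl1)
    then have "(\<lambda>n. x) \<longlonglongrightarrow> a*d*x" using S3 by simp
    then show ?thesis using LIMSEQ_unique tendsto_const by metis
  qed
  have d4: "e*d = d"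
  proof -
    have "(\<lambda>n. e*S n) \<longlonglongrightarrow> e*d" by (intro tendsto_mult tendsto_const Sl)
    then show ?thesis using S4 Sl LIMSEQ_unique by simp
  qed
  define p where "p = 1 - a*d"
  have pa: "a*p = p*a" using d2 by (simp add: p_def right_diff_distrib left_diff_distrib mult.assoc)
  have pp: "p*p = p"
  proof -
    have "a*d*(a*d) = a*d" using d1 d2 by (metis mult.assoc)
    then show ?thesis by (simp add: p_def algebra_simps)
  qed
  have px: "p*x = 0" using d3 by (simp add: p_def left_diff_distrib)
  have qn: "quasinilpotent (a - a^2*d)"
  proof -
    have eq: "a - a^2*d = a*p" by (simp add: p_def power2_eq_square right_diff_distrib mult.assoc)
    have "(\<lambda>n. norm ((a*p)^n) powr (1/real n)) \<longlonglongrightarrow> 0"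
    proof (rule root_bound[OF wl, where K="norm p" and C=1])
      show "\<forall>\<^sub>F n in sequentially. norm ((a*p)^n) \<le> norm p * 1 ^ n * norm (w n)"
        using eventually_ge_at_top[of 1]
      proof eventually_elim
        case (elim n)
        have "(a*p)^n = a^n*p" by (rule pow_comm_idem[OF pa pp elim])
        also have "\<dots> = p*a^n" using pow_comm[OF pa] by simp
        also have "\<dots> = p * w n" using px by (simp add: w_def right_diff_distrib mult.assoc[symmetric])
        finally show ?case by (simp add: norm_mult_ineq)
      qed
    qed auto
    then show ?thesis using eq by (simp add: quasinilpotent_def)
  qed
  have gd: "is_gdrazin_inv a d"
    unfolding is_gdrazin_inv_def using d1 d2 qn by (simp add: power2_eq_square mult.assoc)
  have la: "left_ann d = left_ann e"
  proof (intro set_eqI iffI)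
    fix y assume "y \<in> left_ann d"
    then have "y*d = 0" by (simp add: left_ann_def)
    moreover have "e = d*a*e"
    proof -
      have "d*a*(a*x) = a*(d*a)*x" using d2 by (metis mult.assoc)
      also have "\<dots> = a*(a*d*x)" using d2 by (metis mult.assoc)
      finally show ?thesis using d3 by (simp add: e_def)
    qed
    ultimately have "y*e = 0" by (metis mult.assoc mult_zero_left)
    then show "y \<in> left_ann e" by (simp add: left_ann_def)
  next
    fix y assume "y \<in> left_ann e"
    then have "y*e = 0" by (simp add: left_ann_def)
    then have "y*d = 0" using d4 by (metis mult.assoc mult_zero_left)
    then show "y \<in> left_ann d" by (simp add: left_ann_def)
  qed
  show "\<exists>d. is_gdrazin_inv a d \<and> left_ann d = left_ann (a*x)"
    using gd la by (auto simp: e_def)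
qed



lemma gd_to_gcep:
  fixes a d q :: "'a::real_normed_algebra_1"
  assumes gd: "is_gdrazin_inv a d" and qq: "q*q = q" and la: "left_ann d = left_ann q"
  shows "d*q = a*(d*q)^2" "a*(d*q) = q"
    "(\<lambda>n. norm (a^n - (d*q)*a^(n+1)) powr (1/real n)) \<longlonglongrightarrow> 0"
proof -
  note b = gd_basic[OF gd]
  have add: "a*(d*d) = d" using gd by (simp add: is_gdrazin_inv_def power2_eq_square)
  have "(1-q) \<in> left_ann q" using qq by (simp add: left_ann_def left_diff_distrib)
  then have "(1-q) \<in> left_ann d" using la by simp
  then have "(1-q)*d = 0" by (simp add: left_ann_def)
  then have qd: "q*d = d" by (simp add: left_diff_distrib)
  have "(1-a*d)*d = 0" using add by (simp add: left_diff_distrib mult.assoc)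
  then have "(1-a*d) \<in> left_ann d" by (simp add: left_ann_def)
  then have "(1-a*d) \<in> left_ann q" using la by simp
  then have adq: "a*d*q = q" by (simp add: left_ann_def left_diff_distrib)
  show axq: "a*(d*q) = q" using adq by (simp add: mult.assoc)
  show "d*q = a*(d*q)^2"
  proof -
    have "a*(d*q)^2 = (a*(d*q))*d*q" by (simp add: power2_eq_square mult.assoc)
    also have "\<dots> = d*q" using axq qd by simp
    finally show ?thesis by simp
  qed
  define p where "p = 1 - a*d"
  have pa: "a*p = p*a"
  proof -
    have "a*p = a - a*(a*d)" by (simp add: p_def right_diff_distrib)
    moreover have "p*a = a - a*(d*a)" by (simp add: p_def left_diff_distrib mult.assoc)
    ultimately show ?thesis using b(1) by simp
  qed
  have pp: "p*p = p" using b(3) by (simp add: p_def algebra_simps)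
  have qn: "(\<lambda>n. norm ((a*p)^n) powr (1/real n)) \<longlonglongrightarrow> 0"
    using b(5) by (simp add: quasinilpotent_def p_def)
  have kill: "(1 - d*q*a)*(a*d) = 0"
  proof -
    have qad: "q*(a*d) = d*a" using qd b(1) by (simp add: mult.assoc[symmetric])
    have "d*q*a*(a*d) = d*(q*a*(d*a))" using b(1) by (simp add: mult.assoc)
    also have "\<dots> = d*(d*a*a)" using qad by (metis mult.assoc)
    also have "\<dots> = (d*(a*d))*a" using b(1) by (simp add: mult.assoc)
    also have "\<dots> = d*a" using b(1) b(2) by (metis mult.assoc)
    finally show ?thesis using b(1) by (simp add: left_diff_distrib)
  qed
  show "(\<lambda>n. norm (a^n - (d*q)*a^(n+1)) powr (1/real n)) \<longlonglongrightarrow> 0"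
  proof (rule root_bound[OF qn, where K="norm (1 - d*q*a)" and C=1])
    show "\<forall>\<^sub>F n in sequentially. norm (a^n - (d*q)*a^(n+1)) \<le> norm (1 - d*q*a) * 1^n * norm ((a*p)^n)"
      using eventually_ge_at_top[of 1]
    proof eventually_elim
      case (elim n)
      have "(1 - d*q*a)*(a*p)^n = (1 - d*q*a)*(p*a^n)"
        using pow_comm_idem[OF pa pp elim] pow_comm[OF pa, of n] by simp
      also have "\<dots> = (1 - d*q*a)*a^n - (1 - d*q*a)*(a*d)*a^n"
        by (simp add: p_def left_diff_distrib right_diff_distrib mult.assoc)
      also have "\<dots> = a^n - (d*q)*a^(n+1)"
        using kill by (simp add: left_diff_distrib mult.assoc)
      finally have "norm (a^n - (d*q)*a^(n+1)) = norm ((1 - d*q*a)*(a*p)^n)" by (simp only:)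
      also have "\<dots> \<le> norm (1 - d*q*a) * norm ((a*p)^n)" by (rule norm_mult_ineq)
      finally show ?case by simp
    qed
  qed auto
qed

lemma proj_unique:
  fixes st :: "'a::real_normed_algebra_1 \<Rightarrow> 'a"
  assumes stm: "\<And>x y. st (x*y) = st y * st x"
    and p1: "is_projection st q1" and p2: "is_projection st q2"
    and la: "left_ann q1 = left_ann q2"
  shows "q1 = q2"
proof -
  have h: "q2 = q1*q2" if P1: "is_projection st q1" and P2: "is_projection st q2"
    and L: "left_ann q1 = left_ann q2" for q1 q2
  proof -
    have "q1*q1 = q1" using P1 by (simp add: is_projection_def power2_eq_square)
    then have "(1-q1) \<in> left_ann q1" by (simp add: left_ann_def left_diff_distrib)
    then have "(1-q1) \<in> left_ann q2" using L by simp
    then have "(1-q1)*q2 = 0" by (simp add: left_ann_def)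
    then show ?thesis by (simp add: left_diff_distrib)
  qed
  have e1: "q2 = q1*q2" using h[OF p1 p2 la] .
  have e2: "q1 = q2*q1" using h[OF p2 p1 la[symmetric]] .
  have s1: "st q1 = q1" and s2: "st q2 = q2" using p1 p2 by (auto simp: is_projection_def)
  have "q2 = st q2" using s2 by simp
  also have "\<dots> = st (q1*q2)" using e1 by simp
  also have "\<dots> = q2*q1" using stm s1 s2 by simp
  also have "\<dots> = q1" using e2 by simp
  finally show ?thesis by simp
qed

theorem corollary2p4:
  fixes cs :: "complex \<Rightarrow> 'a::{real_normed_algebra_1,banach} \<Rightarrow> 'a"
    and st :: "'a \<Rightarrow> 'a" and a :: 'a
  assumes "complex_banach_star_algebra cs st"
  shows "a \<in> gcEP_invertible st \<longleftrightarrow>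
           (a \<in> gdrazin_invertible \<and>
            (\<exists>!q. is_projection st q \<and> left_ann (gdrazin a) = left_ann q))"
proof -
  have stm: "\<And>x y. st (x*y) = st y * st x"
    using assms by (simp add: complex_banach_star_algebra_def)
  show ?thesis
  proof
    assume "a \<in> gcEP_invertible st"
    then obtain x where x2: "x = a*x^2" and sx: "st (a*x) = a*x"
      and lim: "(\<lambda>n. norm (a^n - x*a^(n+1)) powr (1/real n)) \<longlonglongrightarrow> 0"
      by (auto simp: gcEP_invertible_def)
    note core = gcep_core[OF x2 lim]
    then obtain d where gd: "is_gdrazin_inv a d" and la: "left_ann d = left_ann (a*x)" by blast
    have gda: "gdrazin a = d" by (rule gdrazin_eq[OF gd])
    have pr: "is_projection st (a*x)"
      using core(1) sx by (simp add: is_projection_def power2_eq_square mult.assoc)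
    show "a \<in> gdrazin_invertible \<and> (\<exists>!q. is_projection st q \<and> left_ann (gdrazin a) = left_ann q)"
    proof
      show "a \<in> gdrazin_invertible" using gd by (auto simp: gdrazin_invertible_def)
      show "\<exists>!q. is_projection st q \<and> left_ann (gdrazin a) = left_ann q"
      proof (rule ex1I[of _ "a*x"])
        show "is_projection st (a*x) \<and> left_ann (gdrazin a) = left_ann (a*x)" using pr la gda by simp
        fix q assume H: "is_projection st q \<and> left_ann (gdrazin a) = left_ann q"
        then have Hq: "is_projection st q" by (rule conjunct1)
        have "left_ann q = left_ann (a*x)" using H la gda by simp
        then show "q = a*x" by (rule proj_unique[OF stm Hq pr])
      qed
    qed
  next
    assume r: "a \<in> gdrazin_invertible \<and> (\<exists>!q. is_projection st q \<and> left_ann (gdrazin a) = left_ann q)"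
    then obtain d where gd: "is_gdrazin_inv a d" by (auto simp: gdrazin_invertible_def)
    have gda: "gdrazin a = d" by (rule gdrazin_eq[OF gd])
    from r obtain q where pq: "is_projection st q" and la: "left_ann d = left_ann q" using gda by auto
    have qq: "q*q = q" and sq: "st q = q" using pq by (auto simp: is_projection_def power2_eq_square)
    note G = gd_to_gcep[OF gd qq la]
    have "st (a*(d*q)) = a*(d*q)" using G(2) sq by simp
    then show "a \<in> gcEP_invertible st"
      unfolding gcEP_invertible_def using G(1) G(3) by blast
  qed
qed


end
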